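(* Let $r\ge 2$ and let $G$ be an $r$-regular graph of order $n$ with $\mathrm{LIP}(G)=k$. Then $k\le \frac{rn-2}{2r-2}$.
   Context: All graphs are finite and simple. For a graph $G$, $\mathrm{LIP}(G)$ denotes the number of vertices of a longest induced path in $G$. The order of a graph is its number of vertices. *)

theory Defs
  imports Complex_Main
begin

definition simple_graph :: "'a set \<Rightarrow> ('a \<Rightarrow> 'a \<Rightarrow> bool) \<Rightarrow> bool" where
  "simple_graph V E \<longleftrightarrow> finite V \<and> (\<forall>u v. E u v \<longrightarrow> u \<in> V \<and> v \<in> V)
     \<and> (\<forall>v. \<not> E v v) \<and> (\<forall>u v. E u v \<longrightarrow> E v u)"

definition degree :: "'a set \<Rightarrow> ('a \<Rightarrow> 'a \<Rightarrow> bool) \<Rightarrow> 'a \<Rightarrow> nat" where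
  "degree V E v = card {u \<in> V. E v u}"

definition regular :: "'a set \<Rightarrow> ('a \<Rightarrow> 'a \<Rightarrow> bool) \<Rightarrow> nat \<Rightarrow> bool" where
  "regular V E r \<longleftrightarrow> (\<forall>v\<in>V. degree V E v = r)"

definition induced_path :: "'a set \<Rightarrow> ('a \<Rightarrow> 'a \<Rightarrow> bool) \<Rightarrow> 'a list \<Rightarrow> bool" where
  "induced_path V E p \<longleftrightarrow> p \<noteq> [] \<and> distinct p \<and> set p \<subseteq> V
     \<and> (\<forall>i j. i < length p \<and> j < length p \<longrightarrow>
            (E (p ! i) (p ! j) \<longleftrightarrow> (i + 1 = j \<or> j + 1 = i)))"

(* Number of vertices of a longest induced path. *)
definition LIP :: "'a set \<Rightarrow> ('a \<Rightarrow> 'a \<Rightarrow> bool) \<Rightarrow> nat" where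
  "LIP V E = Max {length p | p. induced_path V E p}"

end

theory Submission
  imports Defs
begin

lemma path_bound:
  fixes V :: "'a set" and E :: "'a \<Rightarrow> 'a \<Rightarrow> bool" and r :: nat
  assumes g: "simple_graph V E" and reg: "regular V E r" and p: "induced_path V E p"
  shows "length p * r \<le> 2 * (length p - 1) + r * (card V - length p)"
proof -
  define S where "S = set p"
  define T where "T = V - S"
  define k where "k = length p"
  have fin: "finite V" using g simple_graph_def by blast
  have SV: "S \<subseteq> V" using p unfolding induced_path_def S_def by blast
  have kS: "card S = k" using p unfolding induced_path_def S_def k_def by (simp add: distinct_card)
  have finS: "finite S" using SV fin finite_subset by blast
  have cT: "card T = card V - k" unfolding T_def using kS SV fin by (simp add: card_Diff_subset finS)
  define A where "A = Sigma S (\<lambda>u. {v\<in>V. E u v})"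
  have cA: "card A = k * r"
  proof -
    have "card A = (\<Sum>u\<in>S. card {v\<in>V. E u v})" unfolding A_def
      by (rule card_SigmaI) (use finS fin in auto)
    also have "\<dots> = (\<Sum>u\<in>S. r)"
      using reg SV unfolding regular_def degree_def by (intro sum.cong) auto
    finally show ?thesis using kS by simp
  qed
  define Ain where "Ain = {(u,v). u \<in> S \<and> v \<in> S \<and> E u v}"
  define Aout where "Aout = {(u,v). u \<in> S \<and> v \<in> T \<and> E u v}"
  have AU: "A \<subseteq> Ain \<union> Aout" unfolding A_def Ain_def Aout_def T_def by auto
  have Ain_sub: "Ain \<subseteq> (\<lambda>i. (p!i, p!(i+1))) ` {..<k-1} \<union> (\<lambda>i. (p!(i+1), p!i)) ` {..<k-1}"
  proof
    fix x assume "x \<in> Ain"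
    then obtain u v where x: "x = (u,v)" "u \<in> S" "v \<in> S" "E u v" unfolding Ain_def by auto
    obtain i where i: "i < k" "u = p!i" using x(2) unfolding S_def k_def by (auto simp: in_set_conv_nth)
    obtain j where j: "j < k" "v = p!j" using x(3) unfolding S_def k_def by (auto simp: in_set_conv_nth)
    have "i + 1 = j \<or> j + 1 = i" using p i j x(4) unfolding induced_path_def k_def by blast
    then show "x \<in> (\<lambda>i. (p!i, p!(i+1))) ` {..<k-1} \<union> (\<lambda>i. (p!(i+1), p!i)) ` {..<k-1}"
    proof
      assume "i + 1 = j" then show ?thesis using i j x(1) by force
    next
      assume "j + 1 = i" then show ?thesis using i j x(1) by force
    qed
  qed
  have cAin: "card Ain \<le> 2 * (k - 1)"
  proof -
    have "card Ain \<le> card ((\<lambda>i. (p!i, p!(i+1))) ` {..<k-1} \<union> (\<lambda>i. (p!(i+1), p!i)) ` {..<k-1})"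
      by (rule card_mono[OF _ Ain_sub]) auto
    also have "\<dots> \<le> card ((\<lambda>i. (p!i, p!(i+1))) ` {..<k-1}) + card ((\<lambda>i. (p!(i+1), p!i)) ` {..<k-1})"
      by (rule card_Un_le)
    also have "\<dots> \<le> (k-1) + (k-1)"
      by (intro add_mono) (metis card_image_le card_lessThan finite_lessThan)+
    finally show ?thesis by simp
  qed
  have cAout: "card Aout \<le> r * card T"
  proof -
    define B where "B = Sigma T (\<lambda>u. {v\<in>V. E u v})"
    have finT: "finite T" using fin T_def by simp
    have "card B = (\<Sum>u\<in>T. card {v\<in>V. E u v})" unfolding B_def
      by (rule card_SigmaI) (use finT fin in auto)
    also have "\<dots> = (\<Sum>u\<in>T. r)"
      using reg unfolding regular_def degree_def T_def by (intro sum.cong) auto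
    finally have cB: "card B = r * card T" by simp
    have "Aout \<subseteq> (\<lambda>(a,b). (b,a)) ` B"
    proof
      fix x assume "x \<in> Aout"
      then obtain u v where x: "x = (u,v)" "u \<in> S" "v \<in> T" "E u v" unfolding Aout_def by auto
      have "E v u" using g x(4) unfolding simple_graph_def by blast
      then have "(v,u) \<in> B" using x SV unfolding B_def by auto
      then show "x \<in> (\<lambda>(a,b). (b,a)) ` B" using x(1) by force
    qed
    then have "card Aout \<le> card ((\<lambda>(a,b). (b,a)) ` B)"
      by (rule card_mono[rotated]) (simp add: B_def finT fin)
    also have "\<dots> \<le> card B" by (rule card_image_le) (simp add: B_def finT fin)
    finally show ?thesis using cB by simp
  qed
  have finU: "finite (Ain \<union> Aout)" unfolding Ain_def Aout_def T_def
    by (rule finite_subset[of _ "V \<times> V"]) (use SV fin in auto)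
  have "k * r \<le> card (Ain \<union> Aout)" using cA card_mono[OF finU AU] by simp
  also have "\<dots> \<le> card Ain + card Aout" by (rule card_Un_le)
  finally show ?thesis using cAin cAout cT k_def by simp
qed

theorem corollary1:
  fixes V :: "'a set" and E :: "'a \<Rightarrow> 'a \<Rightarrow> bool" and r n k :: nat
  assumes "simple_graph V E" and "V \<noteq> {}"
    and "r \<ge> 2" and "regular V E r"
    and "card V = n" and "LIP V E = k"
  shows "real k \<le> (real r * real n - 2) / (2 * real r - 2)"
proof -
  have fin: "finite V" using assms(1) simple_graph_def by blast
  let ?L = "{length p | p. induced_path V E p}"
  have "?L \<subseteq> {..card V}"
  proof
    fix x assume "x \<in> ?L"
    then obtain p where "x = length p" "induced_path V E p" by auto
    then show "x \<in> {..card V}" unfolding induced_path_def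
      by (metis atMost_iff card_mono distinct_card fin)
  qed
  then have finL: "finite ?L" using finite_subset by blast
  obtain v where v: "v \<in> V" using assms(2) by blast
  have "induced_path V E [v]" using v assms(1) unfolding induced_path_def simple_graph_def by auto
  then have neL: "?L \<noteq> {}" by blast
  have "k \<in> ?L" using Max_in[OF finL neL] assms(6) unfolding LIP_def by simp
  then obtain p where p: "k = length p" "induced_path V E p" by auto
  have k1: "k \<ge> 1" using p unfolding induced_path_def by (simp add: Suc_le_eq)
  have kn: "k \<le> n" using p assms(5) fin unfolding induced_path_def
    by (metis card_mono distinct_card)
  have b: "k * r \<le> 2 * (k - 1) + r * (n - k)" using path_bound[OF assms(1) assms(4) p(2)] p(1) assms(5) by simp
  have "real k * real r \<le> 2 * (real k - 1) + real r * (real n - real k)"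
  proof -
    have "real (k * r) \<le> real (2 * (k - 1) + r * (n - k))" using b by (simp only: of_nat_le_iff)
    then show ?thesis using k1 kn by (simp add: of_nat_diff)
  qed
  then have "real k * (2 * real r - 2) \<le> real r * real n - 2" by (simp add: algebra_simps)
  moreover have "2 * real r - 2 > 0" using assms(3) by simp
  ultimately show ?thesis by (simp add: pos_le_divide_eq)
qed

end
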